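(* Let $r\ge 1$ and let $p_1<p_2<\cdots<p_r$ be primes such that $p_1>2$ and $p_{j+1}-p_j>r$ for all $1\le j\le r-1$. Let $\alpha_j:=p_j-j$ for $1\le j\le r$. Then the determinant of the $r\times r$ matrix whose entry in row $j$ and column $k$ ($1\le j,k\le r$) is $\dfrac{B_{\alpha_j+k-1}(1)}{\alpha_j+k-1}$ is nonzero.
   Context: $B_n(x)$ denotes the Bernoulli polynomial, defined by $\frac{ze^{xz}}{e^z-1}=\sum_{n\ge 0}B_n(x)\frac{z^n}{n!}$. *)

theory Defs
  imports "HOL-Computational_Algebra.Formal_Power_Series" "Jordan_Normal_Form.Determinant"
begin

definition bernpoly :: "nat \<Rightarrow> real \<Rightarrow> real" where
  "bernpoly n x = fact n * fps_nth (fps_X * fps_exp x / (fps_exp 1 - 1)) n"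

end

theory Submission
  imports Defs "HOL-Complex_Analysis.Complex_Analysis"
begin


hide_const (open) Finite_Cartesian_Product.vec Finite_Cartesian_Product.mat Determinants.det
hide_type (open) Finite_Cartesian_Product.vec

definition nzc :: "real poly \<Rightarrow> nat" where
  "nzc p = card {i. coeff p i \<noteq> 0}"

lemma nzc_finite: "finite {i. coeff (p::real poly) i \<noteq> 0}"
proof -
  have "{i. coeff p i \<noteq> 0} \<subseteq> {..degree p}"
    using le_degree by fastforce
  thus ?thesis using finite_subset by blast
qed

lemma rolle_set:
  fixes p :: "real poly"
  assumes "finite S" "\<forall>x\<in>S. poly p x = 0"
  shows "\<exists>Y. finite Y \<and> (\<forall>y\<in>Y. poly (pderiv p) y = 0) \<and> Y \<inter> S = {} \<and>
             card S \<le> card Y + 1 \<and> (\<forall>y\<in>Y. \<exists>a\<in>S. a < y) \<and> (\<forall>y\<in>Y. \<exists>a\<in>S. y < a)"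
  using assms
proof (induction S rule: finite_linorder_max_induct)
  case empty
  then show ?case by (intro exI[of _ "{}"]) auto
next
  case (insert b A)
  then obtain Y where Y: "finite Y" "\<forall>y\<in>Y. poly (pderiv p) y = 0" "Y \<inter> A = {}"
      "card A \<le> card Y + 1" "\<forall>y\<in>Y. \<exists>a\<in>A. a < y" "\<forall>y\<in>Y. \<exists>a\<in>A. y < a"
    by auto
  show ?case
  proof (cases "A = {}")
    case True
    then show ?thesis by (intro exI[of _ "{}"]) auto
  next
    case False
    have maxA: "Max A < b" using insert False by auto
    have maxA_in: "Max A \<in> A" using insert False by auto
    have "poly p (Max A) = 0" "poly p b = 0" using insert maxA_in by auto
    then obtain z where z: "Max A < z" "z < b" "poly (pderiv p) z = 0"
      using poly_MVT[OF maxA, of p] by auto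
    have Yle: "y < Max A" if yY: "y \<in> Y" for y
    proof -
      obtain a where "a \<in> A" "y < a" using Y(6) yY by auto
      moreover have "a \<le> Max A" using \<open>a \<in> A\<close> insert(1) by auto
      ultimately show ?thesis by simp
    qed
    have zY: "z \<notin> Y" using Yle z by force
    have zA: "z \<notin> A" using z(1) insert(1) by (meson Max_ge leD less_imp_le)
    have bY: "b \<notin> Y" using Yle maxA by force
    show ?thesis
    proof (intro exI[of _ "insert z Y"] conjI)
      show "finite (insert z Y)" using Y by auto
      show "\<forall>y\<in>insert z Y. poly (pderiv p) y = 0" using Y z by auto
      show "insert z Y \<inter> insert b A = {}"
        using zA bY Y(3) z(2) by blast
      show "card (insert b A) \<le> card (insert z Y) + 1"
        using Y zY insert by auto
      show "\<forall>y\<in>insert z Y. \<exists>a\<in>insert b A. a < y"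
        using Y(5) z(1) maxA_in by blast
      show "\<forall>y\<in>insert z Y. \<exists>a\<in>insert b A. y < a"
        using Y(6) z(2) by blast
    qed
  qed
qed

lemma order_sum_restrict:
  fixes p :: "real poly"
  assumes "finite S"
  shows "(\<Sum>x\<in>S. order x p) = (\<Sum>x\<in>{x\<in>S. poly p x = 0}. order x p)"
proof (cases "p = 0")
  case True
  then show ?thesis by simp
next
  case False
  show ?thesis
    by (rule sum.mono_neutral_right) (use assms False order_root in auto)
qed

lemma nzc_pCons0: "nzc (pCons 0 q) = nzc q"
proof -
  have "i \<in> {i. coeff (pCons 0 q) i \<noteq> 0} \<longleftrightarrow> i \<in> Suc ` {i. coeff q i \<noteq> 0}" for i
    by (cases i) (auto simp: coeff_pCons)
  hence "{i. coeff (pCons 0 q) i \<noteq> 0} = Suc ` {i. coeff q i \<noteq> 0}" by blast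
  thus ?thesis unfolding nzc_def by (simp add: card_image)
qed

lemma nzc_pderiv:
  fixes p :: "real poly"
  assumes "coeff p 0 \<noteq> 0"
  shows "nzc p = Suc (nzc (pderiv p))"
proof -
  have A: "{i. coeff (pderiv p) i \<noteq> 0} = {i. coeff p (Suc i) \<noteq> 0}"
    by (auto simp: coeff_pderiv)
  have B: "{i. coeff p i \<noteq> 0} = insert 0 (Suc ` {i. coeff p (Suc i) \<noteq> 0})"
  proof -
    have "i \<in> {i. coeff p i \<noteq> 0} \<longleftrightarrow> i \<in> insert 0 (Suc ` {i. coeff p (Suc i) \<noteq> 0})" for i
      using assms by (cases i) auto
    thus ?thesis by blast
  qed
  have fin: "finite {i. coeff p (Suc i) \<noteq> 0}"
    using nzc_finite[of "pderiv p"] A by simp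
  have "0 \<notin> Suc ` {i. coeff p (Suc i) \<noteq> 0}" by auto
  then show ?thesis unfolding nzc_def A B using fin by (simp add: card_image)
qed

lemma descartes_bound:
  fixes p :: "real poly"
  assumes "p \<noteq> 0" "finite S" "S \<subseteq> {0<..}"
  shows "(\<Sum>x\<in>S. order x p) + 1 \<le> nzc p"
  using assms
proof (induction "degree p" arbitrary: p S rule: less_induct)
  case less
  show ?case
  proof (cases "coeff p 0 = 0")
    case True
    obtain q where pq: "p = pCons 0 q"
      using True by (metis pCons_cases coeff_pCons_0)
    have q0: "q \<noteq> 0" using less(2) pq by auto
    have degq: "degree q < degree p" using pq q0 by simp
    have ord: "order x p = order x q" if "x \<in> S" for x
    proof -
      have pq': "p = [:0,1:] * q" using pq by simp
      hence "order x p = order x [:0,1:] + order x q"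
        using less(2) order_mult by metis
      moreover have "poly [:0,1:] x \<noteq> 0" using that less(4) by auto
      hence "order x [:0,1:] = 0" by (simp add: order_0I)
      ultimately show ?thesis by simp
    qed
    have "(\<Sum>x\<in>S. order x p) = (\<Sum>x\<in>S. order x q)" using ord by simp
    also have "\<dots> + 1 \<le> nzc q" using less(1)[OF degq q0 less(3) less(4)] .
    finally show ?thesis using pq nzc_pCons0 by simp
  next
    case False
    show ?thesis
    proof (cases "degree p = 0")
      case True
      then obtain c where pc: "p = [:c:]" using degree_eq_zeroE by blast
      hence "order x p = 0" for x using less(2) by (simp add: order_0I)
      moreover have "0 \<in> {i. coeff p i \<noteq> 0}" using False by simp
      hence "nzc p \<ge> 1" using nzc_finite[of p] unfolding nzc_def
        by (metis One_nat_def Suc_leI card_gt_0_iff empty_iff)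
      ultimately show ?thesis by simp
    next
      case deg: False
      define q where "q = pderiv p"
      have q0: "q \<noteq> 0" using deg unfolding q_def by (simp add: pderiv_eq_0_iff)
      have degq: "degree q < degree p" using deg unfolding q_def degree_pderiv by simp
      define S0 where "S0 = {x\<in>S. poly p x = 0}"
      have S0fin: "finite S0" using less(3) S0_def by auto
      obtain Y where Y: "finite Y" "\<forall>y\<in>Y. poly q y = 0" "Y \<inter> S0 = {}"
          "card S0 \<le> card Y + 1" "\<forall>y\<in>Y. \<exists>a\<in>S0. a < y"
        using rolle_set[OF S0fin, of p] S0_def q_def by auto
      have S0pos: "S0 \<subseteq> {0<..}" using less(4) S0_def by auto
      have Ypos: "Y \<subseteq> {0<..}"
      proof
        fix y assume "y \<in> Y"
        then obtain a where "a \<in> S0" "a < y" using Y(5) by auto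
        thus "y \<in> {0<..}" using S0pos by force
      qed
      have IH: "(\<Sum>x\<in>S0 \<union> Y. order x q) + 1 \<le> nzc q"
        using less(1)[OF degq q0] S0fin Y(1) S0pos Ypos by auto
      have ordS0: "order x p = Suc (order x q)" if "x \<in> S0" for x
        using order_pderiv[OF less(2)] that S0_def q_def by auto
      have ordY: "1 \<le> order y q" if "y \<in> Y" for y
        using Y(2) that q0 order_root by (metis less_one not_le)
      have "(\<Sum>x\<in>S. order x p) = (\<Sum>x\<in>S0. order x p)"
        unfolding S0_def by (rule order_sum_restrict[OF less(3)])
      also have "\<dots> = (\<Sum>x\<in>S0. Suc (order x q))"
        using ordS0 by simp
      also have "\<dots> = (\<Sum>x\<in>S0. order x q) + card S0"
        by (simp add: sum_Suc)
      also have "\<dots> \<le> (\<Sum>x\<in>S0. order x q) + card Y + 1" using Y(4) by simp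
      also have "card Y \<le> (\<Sum>y\<in>Y. order y q)"
        using ordY sum_mono[of Y "\<lambda>_. 1::nat" "\<lambda>y. order y q"] by simp
      also have "(\<Sum>x\<in>S0. order x q) + (\<Sum>y\<in>Y. order y q) = (\<Sum>x\<in>S0 \<union> Y. order x q)"
      proof -
        have "S0 \<inter> Y = {}" using Y(3) by blast
        from sum.union_disjoint[OF S0fin Y(1) this, of "\<lambda>x. order x q"] show ?thesis by simp
      qed
      finally have "(\<Sum>x\<in>S. order x p) \<le> (\<Sum>x\<in>S0 \<union> Y. order x q) + 1" by simp
      with IH have "(\<Sum>x\<in>S. order x p) + 1 \<le> nzc q + 1" by simp
      thus ?thesis using nzc_pderiv[OF False] q_def by simp
    qed
  qed
qed


lemma no_pos_root_sign:
  fixes p :: "real poly"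
  assumes "\<forall>x>0. poly p x \<noteq> 0"
  shows "(\<forall>x>0. poly p x > 0) \<or> (\<forall>x>0. poly p x < 0)"
proof (rule ccontr)
  assume "\<not> ?thesis"
  then obtain x y where xy: "x > 0" "y > 0" "poly p x \<le> 0" "poly p y \<ge> 0" by force
  hence xy': "poly p x < 0" "poly p y > 0" using assms by force+
  consider "x < y" | "y < x" | "x = y" by linarith
  thus False
  proof cases
    case 1
    then obtain z where "z > x" "z < y" "poly p z = 0" using poly_IVT_pos[OF 1 xy'] by auto
    thus False using assms xy by force
  next
    case 2
    then obtain z where "z > y" "z < x" "poly p z = 0" using poly_IVT_neg[OF 2 xy'(2) xy'(1)] by auto
    thus False using assms xy by force
  next
    case 3
    thus False using xy' by simp
  qed
qed

lemma order_linear_factor: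
  fixes x t :: real
  shows "order x [:-t, 1:] = (if x = t then 1 else 0)"
proof (cases "x = t")
  case True
  then show ?thesis using order_power_n_n[of t 1] by simp
next
  case False
  then have "poly [:-t, 1:] x \<noteq> 0" by simp
  then show ?thesis using False by (simp add: order_0I)
qed

lemma even_order_sign:
  fixes p :: "real poly"
  assumes "p \<noteq> 0" "\<forall>x>0. even (order x p)"
  shows "(\<forall>x>0. poly p x \<ge> 0) \<or> (\<forall>x>0. poly p x \<le> 0)"
  using assms
proof (induction "degree p" arbitrary: p rule: less_induct)
  case less
  show ?case
  proof (cases "\<exists>x>0. poly p x = 0")
    case False
    then show ?thesis using no_pos_root_sign[of p] by force
  next
    case True
    then obtain x where x: "x > 0" "poly p x = 0" by auto
    have "order x p \<noteq> 0" using x less(2) order_root by blast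
    moreover have "even (order x p)" using less(3) x by auto
    ultimately have "2 \<le> order x p" by presburger
    hence "[:-x, 1:] ^ 2 dvd p" using order_divides by blast
    then obtain q where pq: "p = [:-x, 1:] ^ 2 * q" by (elim dvdE)
    have q0: "q \<noteq> 0" using pq less(2) by auto
    have "degree p = degree ([:-x, 1:] ^ 2) + degree q"
      using pq q0 by (simp add: degree_mult_eq)
    also have "degree ([:-x, 1:] ^ 2) = 2" by (simp add: degree_power_eq)
    finally have degq: "degree q < degree p" by simp
    have ordq: "even (order y q)" if "y > 0" for y
    proof -
      have "order y p = order y ([:-x, 1:] ^ 2) + order y q"
        using pq less(2) order_mult by metis
      moreover have "order y ([:-x, 1:] ^ 2) = (if y = x then 2 else 0)"
      proof (cases "y = x")
        case True
        then show ?thesis using order_power_n_n[of x 2] by simp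
      next
        case False
        then have "poly ([:-x, 1:] ^ 2) y \<noteq> 0" by simp
        then show ?thesis using False by (simp add: order_0I)
      qed
      moreover have "even (order y p)" using less(3) that by blast
      ultimately show ?thesis by (cases "y = x") auto
    qed
    have IH: "(\<forall>x>0. poly q x \<ge> 0) \<or> (\<forall>x>0. poly q x \<le> 0)"
      using less(1)[OF degq q0] ordq by blast
    have pv: "poly p y = (y - x)^2 * poly q y" for y using pq by simp
    show ?thesis
    proof (cases "\<forall>x>0. poly q x \<ge> 0")
      case True
      then show ?thesis using pv by (auto intro!: mult_nonneg_nonneg)
    next
      case False
      then have "\<forall>x>0. poly q x \<le> 0" using IH by blast
      then show ?thesis using pv by (auto intro!: mult_nonneg_nonpos)
    qed
  qed
qed

lemma prod_linear_dvd:
  fixes H :: "real poly"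
  assumes "finite R" "\<forall>t\<in>R. poly H t = 0"
  shows "(\<Prod>t\<in>R. [:-t, 1:]) dvd H"
  using assms
proof (induction R arbitrary: H rule: finite_induct)
  case empty
  then show ?case by simp
next
  case (insert t R)
  have "[:-t, 1:] dvd H" using insert(4) poly_eq_0_iff_dvd by blast
  then obtain H' where H': "H = [:-t, 1:] * H'" by (elim dvdE)
  have "\<forall>s\<in>R. poly H' s = 0"
  proof
    fix s assume s: "s \<in> R"
    have "poly H s = poly [:-t, 1:] s * poly H' s" by (subst H') (rule poly_mult)
    also have "poly [:-t, 1:] s = s - t" by simp
    finally have "poly H s = (s - t) * poly H' s" .
    moreover have "s \<noteq> t" using s insert(2) by auto
    ultimately show "poly H' s = 0" using insert(4) s by simp
  qed
  hence "(\<Prod>t\<in>R. [:-t, 1:]) dvd H'" using insert(3) by blast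
  hence "[:-t, 1:] * (\<Prod>t\<in>R. [:-t, 1:]) dvd [:-t, 1:] * H'" by (rule mult_dvd_mono[OF dvd_refl])
  thus ?case using H' insert(1,2) by simp
qed

lemma prod_linear_nonzero:
  "finite R \<Longrightarrow> (\<Prod>t\<in>R. [:-t, 1:]) \<noteq> (0 :: real poly)"
  by (simp add: prod_zero_iff)

lemma order_prod_linear:
  fixes x :: real
  assumes "finite R"
  shows "order x (\<Prod>t\<in>R. [:-t, 1:]) = (if x \<in> R then 1 else 0)"
  using assms
proof (induction R rule: finite_induct)
  case empty
  then show ?case by (simp add: order_0I)
next
  case (insert t R)
  have "order x (\<Prod>t\<in>insert t R. [:-t, 1:]) = order x ([:-t, 1:] * (\<Prod>t\<in>R. [:-t, 1:]))"
    using insert(1,2) by simp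
  also have "\<dots> = order x [:-t, 1:] + order x (\<Prod>t\<in>R. [:-t, 1:])"
  proof (rule order_mult)
    have "[:-t, 1:] \<noteq> (0 :: real poly)" by simp
    thus "[:-t, 1:] * (\<Prod>t\<in>R. [:-t, 1:]) \<noteq> 0"
      using prod_linear_nonzero[OF insert(1)] by (simp only: mult_eq_0_iff de_Morgan_disj) simp
  qed
  finally show ?case using insert order_linear_factor[of x t] by auto
qed


lemma exists_vanishing_comb:
  fixes E :: "nat set" and R :: "real set"
  assumes "finite E" "finite R" "card E = card R + 1"
  shows "\<exists>w. (\<exists>e\<in>E. w e \<noteq> 0) \<and> (\<forall>t\<in>R. (\<Sum>e\<in>E. w e * t ^ e) = 0)"
proof -
  define m where "m = card R"
  define es where "es = sorted_list_of_set E"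
  define rs where "rs = sorted_list_of_set R"
  have les: "length es = m + 1" using assms unfolding es_def m_def by simp
  have lrs: "length rs = m" using assms unfolding rs_def m_def by simp
  have des: "distinct es" and ses: "set es = E" using assms unfolding es_def by auto
  have srs: "set rs = R" using assms unfolding rs_def by auto
  define c where "c i = vec (m + 1) (\<lambda>j. (rs ! i) ^ (es ! j))" for i
  define A where "A = mat\<^sub>r (m + 1) (m + 1) (\<lambda>i. if i = m then 0\<^sub>v (m + 1) else c i)"
  have "det A = 0" unfolding A_def
    by (rule Determinant.det_row_0) (auto simp: c_def)
  moreover have Ac: "A \<in> carrier_mat (m + 1) (m + 1)" unfolding A_def by simp
  ultimately obtain v where v: "v \<in> carrier_vec (m + 1)" "v \<noteq> 0\<^sub>v (m + 1)" "A *\<^sub>v v = 0\<^sub>v (m + 1)"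
    using det_0_iff_vec_prod_zero_field[OF Ac] by blast
  have inj: "inj_on (\<lambda>j. es ! j) {..<m+1}"
    using des les by (simp add: inj_on_def nth_eq_iff_index_eq)
  have img: "(\<lambda>j. es ! j) ` {..<m+1} = E"
    using ses les by (auto simp: in_set_conv_nth)
  define w where "w e = v $ (the_inv_into {..<m+1} (\<lambda>j. es ! j) e)" for e
  have wj: "w (es ! j) = v $ j" if "j < m + 1" for j
    unfolding w_def using the_inv_into_f_f[OF inj] that by simp
  have sumE: "(\<Sum>e\<in>E. w e * t ^ e) = (\<Sum>j<m+1. v $ j * t ^ (es ! j))" for t
  proof -
    have "(\<Sum>e\<in>E. w e * t ^ e) = (\<Sum>j<m+1. w (es ! j) * t ^ (es ! j))"
      unfolding img[symmetric] by (rule sum.reindex[OF inj, unfolded comp_def])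
    also have "\<dots> = (\<Sum>j<m+1. v $ j * t ^ (es ! j))"
      by (rule sum.cong) (auto simp: wj)
    finally show ?thesis .
  qed
  show ?thesis
  proof (intro exI[of _ w] conjI)
    have "\<exists>j<m+1. v $ j \<noteq> 0"
    proof (rule ccontr)
      assume "\<not> ?thesis"
      hence "v = 0\<^sub>v (m+1)" using v(1) by (intro eq_vecI) auto
      thus False using v(2) by simp
    qed
    then obtain j where j: "j < m + 1" "v $ j \<noteq> 0" by blast
    thus "\<exists>e\<in>E. w e \<noteq> 0" using wj img by force
    show "\<forall>t\<in>R. (\<Sum>e\<in>E. w e * t ^ e) = 0"
    proof
      fix t assume "t \<in> R"
      then obtain i where i: "i < m" "rs ! i = t" using srs lrs by (auto simp: in_set_conv_nth)
      have "(A *\<^sub>v v) $ i = 0" using v(3) i by simp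
      moreover have "(A *\<^sub>v v) $ i = (\<Sum>j<m+1. v $ j * t ^ (es ! j))"
        using i v(1) unfolding A_def c_def
        by (simp add: scalar_prod_def lessThan_atLeast0 mult.commute)
      ultimately show "(\<Sum>e\<in>E. w e * t ^ e) = 0" using sumE by simp
    qed
  qed
qed


lemma exists_pos_nonroot:
  fixes P :: "real poly"
  assumes "P \<noteq> 0"
  shows "\<exists>x>0. poly P x \<noteq> 0"
proof -
  define Z where "Z = {x. poly P x = 0}"
  have fin: "finite (insert 0 Z)" using poly_roots_finite[OF assms] Z_def by simp
  define x where "x = Max (insert 0 Z) + 1"
  have "0 \<le> Max (insert 0 Z)" using fin by simp
  hence "x > 0" unfolding x_def by simp
  moreover have "x \<notin> Z"
  proof
    assume "x \<in> Z"
    hence "x \<le> Max (insert 0 Z)" using fin by simp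
    thus False unfolding x_def by simp
  qed
  ultimately show ?thesis unfolding Z_def by auto
qed

lemma sign_partner:
  fixes G :: "real poly" and E :: "nat set"
  assumes G0: "G \<noteq> 0" and finE: "finite E" and nzE: "nzc G \<le> card E"
  shows "\<exists>w. (\<forall>x>0. 0 \<le> (\<Sum>e\<in>E. w e * x ^ e) * poly G x) \<and>
             (\<exists>x>0. (\<Sum>e\<in>E. w e * x ^ e) * poly G x \<noteq> 0)"
proof -
  define R where "R = {x. 0 < x \<and> poly G x = 0 \<and> odd (order x G)}"
  have finR: "finite R"
    using poly_roots_finite[OF G0] unfolding R_def by (rule rev_finite_subset) auto
  have Rpos: "R \<subseteq> {0<..}" unfolding R_def by auto
  have "card R \<le> (\<Sum>x\<in>R. order x G)"
  proof -
    have "(\<Sum>x\<in>R. (1::nat)) \<le> (\<Sum>x\<in>R. order x G)"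
    proof (rule sum_mono)
      fix x assume "x \<in> R"
      hence "order x G \<noteq> 0" unfolding R_def using G0 order_root by blast
      thus "1 \<le> order x G" by simp
    qed
    thus ?thesis by simp
  qed
  also have "(\<Sum>x\<in>R. order x G) + 1 \<le> nzc G"
    using descartes_bound[OF G0 finR Rpos] .
  finally have cardR: "card R + 1 \<le> card E" using nzE by simp
  obtain E' where E': "E' \<subseteq> E" "card E' = card R + 1" "finite E'"
    using obtain_subset_with_card_n[OF cardR] by blast
  obtain w where w: "\<exists>e\<in>E'. w e \<noteq> 0" "\<forall>t\<in>R. (\<Sum>e\<in>E'. w e * t ^ e) = 0"
    using exists_vanishing_comb[OF E'(3) finR E'(2)] by blast
  define H where "H = (\<Sum>e\<in>E'. monom (w e) e)"
  have polyH: "poly H x = (\<Sum>e\<in>E'. w e * x ^ e)" for x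
    unfolding H_def by (simp add: poly_sum poly_monom)
  have coeffH: "coeff H i = (if i \<in> E' then w i else 0)" for i
    unfolding H_def by (simp add: coeff_sum coeff_monom E'(3))
  have H0: "H \<noteq> 0"
  proof
    assume "H = 0"
    then show False using w(1) coeffH by (metis coeff_0)
  qed
  have nzH: "nzc H \<le> card R + 1"
  proof -
    have "{i. coeff H i \<noteq> 0} \<subseteq> E'" using coeffH by (auto split: if_splits)
    hence "nzc H \<le> card E'" unfolding nzc_def using E'(3) by (rule card_mono[rotated])
    thus ?thesis using E'(2) by simp
  qed
  define T where "T = (\<Prod>t\<in>R. [:-t, 1:])"
  have T0: "T \<noteq> 0" unfolding T_def using prod_linear_nonzero[OF finR] .
  have ordT: "order x T = (if x \<in> R then 1 else 0)" for x
    unfolding T_def using order_prod_linear[OF finR] .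
  have "T dvd H" unfolding T_def
    using prod_linear_dvd[OF finR] w(2) polyH by auto
  then obtain U where HTU: "H = T * U" by (elim dvdE)
  have U0: "U \<noteq> 0" using H0 HTU by auto
  have Unz: "\<forall>x>0. poly U x \<noteq> 0"
  proof (intro allI impI notI)
    fix x :: real assume x: "x > 0" "poly U x = 0"
    define S where "S = insert x R"
    have finS: "finite S" and Spos: "S \<subseteq> {0<..}" using finR Rpos x unfolding S_def by auto
    have ordH: "order y H = order y T + order y U" for y
      using HTU H0 order_mult by metis
    have "(\<Sum>y\<in>S. order y H) = (\<Sum>y\<in>S. order y T) + (\<Sum>y\<in>S. order y U)"
      by (simp add: ordH sum.distrib)
    moreover have "(\<Sum>y\<in>S. order y T) \<ge> (\<Sum>y\<in>R. order y T)"
      using finS unfolding S_def by (intro sum_mono2) auto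
    moreover have "(\<Sum>y\<in>R. order y T) = card R" using ordT by simp
    moreover have "(\<Sum>y\<in>S. order y U) \<ge> order x U"
      using finS unfolding S_def by (intro member_le_sum) auto
    moreover have "order x U \<ge> 1" using x U0 order_root
      by (metis less_one not_le)
    ultimately have "(\<Sum>y\<in>S. order y H) \<ge> card R + 1" by linarith
    moreover have "(\<Sum>y\<in>S. order y H) + 1 \<le> nzc H"
      using descartes_bound[OF H0 finS Spos] .
    ultimately show False using nzH by linarith
  qed
  have Usign: "(\<forall>x>0. poly U x > 0) \<or> (\<forall>x>0. poly U x < 0)"
    using no_pos_root_sign[OF Unz] .
  have TG0: "T * G \<noteq> 0" using T0 G0 by simp
  have TGeven: "\<forall>x>0. even (order x (T * G))"
  proof (intro allI impI)
    fix x :: real assume x: "x > 0"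
    have o: "order x (T * G) = order x T + order x G" using TG0 order_mult by metis
    show "even (order x (T * G))"
    proof (cases "x \<in> R")
      case True
      then show ?thesis using o ordT unfolding R_def by auto
    next
      case False
      show ?thesis
      proof (cases "poly G x = 0")
        case True
        then have "even (order x G)" using False x unfolding R_def by auto
        then show ?thesis using o ordT False by simp
      next
        case nr: False
        then have "order x G = 0" by (simp add: order_0I)
        then show ?thesis using o ordT False by simp
      qed
    qed
  qed
  have TGsign: "(\<forall>x>0. poly (T * G) x \<ge> 0) \<or> (\<forall>x>0. poly (T * G) x \<le> 0)"
    using even_order_sign[OF TG0 TGeven] .
  have HG: "poly H x * poly G x = poly U x * poly (T * G) x" for x
    using HTU by (simp add: mult_ac)
  have "\<exists>\<sigma>::real. (\<sigma> = 1 \<or> \<sigma> = -1) \<and> (\<forall>x>0. 0 \<le> \<sigma> * (poly H x * poly G x))"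
  proof -
    consider "\<forall>x>0. poly U x > 0" "\<forall>x>0. poly (T * G) x \<ge> 0"
      | "\<forall>x>0. poly U x > 0" "\<forall>x>0. poly (T * G) x \<le> 0"
      | "\<forall>x>0. poly U x < 0" "\<forall>x>0. poly (T * G) x \<ge> 0"
      | "\<forall>x>0. poly U x < 0" "\<forall>x>0. poly (T * G) x \<le> 0"
      using Usign TGsign by blast
    then show ?thesis
    proof cases
      case 1
      then show ?thesis by (intro exI[of _ 1]) (auto simp: HG)
    next
      case 2
      show ?thesis
      proof (intro exI[of _ "-1"] conjI allI impI)
        fix x :: real assume x: "x > 0"
        have "poly U x \<ge> 0" "poly (T * G) x \<le> 0" using 2 x by (auto intro: less_imp_le)
        hence "poly U x * poly (T * G) x \<le> 0" by (rule mult_nonneg_nonpos)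
        thus "0 \<le> -1 * (poly H x * poly G x)" by (simp add: HG)
      qed simp
    next
      case 3
      show ?thesis
      proof (intro exI[of _ "-1"] conjI allI impI)
        fix x :: real assume x: "x > 0"
        have "poly U x \<le> 0" "poly (T * G) x \<ge> 0" using 3 x by (auto intro: less_imp_le)
        hence "poly U x * poly (T * G) x \<le> 0" by (rule mult_nonpos_nonneg)
        thus "0 \<le> -1 * (poly H x * poly G x)" by (simp add: HG)
      qed simp
    next
      case 4
      show ?thesis
      proof (intro exI[of _ 1] conjI allI impI)
        fix x :: real assume x: "x > 0"
        have "poly U x \<le> 0" "poly (T * G) x \<le> 0" using 4 x by (auto intro: less_imp_le)
        hence "0 \<le> poly U x * poly (T * G) x" by (rule mult_nonpos_nonpos)
        thus "0 \<le> 1 * (poly H x * poly G x)" by (simp add: HG)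
      qed simp
    qed
  qed
  then obtain \<sigma> :: real where \<sigma>: "\<sigma> = 1 \<or> \<sigma> = -1" "\<forall>x>0. 0 \<le> \<sigma> * (poly H x * poly G x)"
    by blast
  define w' where "w' e = (if e \<in> E' then \<sigma> * w e else 0)" for e
  have sumw': "(\<Sum>e\<in>E. w' e * x ^ e) = \<sigma> * poly H x" for x
  proof -
    have "(\<Sum>e\<in>E. w' e * x ^ e) = (\<Sum>e\<in>E'. w' e * x ^ e)"
      using E' finE by (intro sum.mono_neutral_right) (auto simp: w'_def)
    also have "\<dots> = \<sigma> * poly H x"
      by (simp add: polyH w'_def sum_distrib_left mult_ac)
    finally show ?thesis .
  qed
  obtain x0 where x0: "x0 > 0" "poly (H * G) x0 \<noteq> 0"
    using exists_pos_nonroot[of "H * G"] H0 G0 by auto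
  show ?thesis
  proof (intro exI[of _ w'] conjI allI impI)
    fix x :: real assume "x > 0"
    thus "0 \<le> (\<Sum>e\<in>E. w' e * x ^ e) * poly G x" using \<sigma>(2) by (simp add: sumw' mult_ac)
  next
    show "\<exists>x>0. (\<Sum>e\<in>E. w' e * x ^ e) * poly G x \<noteq> 0"
      using x0 \<sigma>(1) by (intro exI[of _ x0]) (auto simp: sumw')
  qed
qed




lemma not_Ints_nonpos: "(z::complex) \<notin> \<int> \<Longrightarrow> z \<notin> \<int>\<^sub>\<le>\<^sub>0"
  using nonpos_Ints_subset_Ints by blast

lemma not_Ints_one_minus: "(z::complex) \<notin> \<int> \<Longrightarrow> 1 - z \<notin> \<int>"
proof
  assume "z \<notin> \<int>" "1 - z \<in> \<int>"
  hence "1 - (1 - z) \<in> \<int>" by (intro Ints_diff) auto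
  thus False using \<open>z \<notin> \<int>\<close> by simp
qed

lemma sin_pi_nonzero:
  fixes z :: complex assumes "z \<notin> \<int>"
  shows "sin (of_real pi * z) \<noteq> 0"
proof
  assume "sin (of_real pi * z) = 0"
  then obtain n :: int where "of_real pi * z = of_real (of_int n * pi)"
    by (auto simp: sin_eq_0)
  hence "z = of_int n" by (simp add: field_simps)
  thus False using assms by simp
qed

lemma cot_digamma:
  fixes z :: complex assumes z: "z \<notin> \<int>"
  shows "of_real pi * cot (of_real pi * z) = Digamma (1 - z) - Digamma z"
proof -
  have z0: "z \<notin> \<int>\<^sub>\<le>\<^sub>0" using z by (rule not_Ints_nonpos)
  have z1: "1 - z \<notin> \<int>\<^sub>\<le>\<^sub>0" using not_Ints_one_minus[OF z] by (rule not_Ints_nonpos)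
  have s0: "sin (of_real pi * z) \<noteq> 0" using sin_pi_nonzero[OF z] .
  define g where "g w = Gamma w * Gamma (1 - w) * sin (of_real pi * w)" for w :: complex
  define g' where "g' = Gamma z * Digamma z * Gamma (1 - z) * sin (of_real pi * z)
      - Gamma z * (Gamma (1 - z) * Digamma (1 - z)) * sin (of_real pi * z)
      + Gamma z * Gamma (1 - z) * (cos (of_real pi * z) * of_real pi)"
  have d1: "(g has_field_derivative g') (at z)"
    unfolding g_def g'_def
    by (rule derivative_eq_intros refl has_field_derivative_Gamma z0 z1 | simp)+ (simp add: algebra_simps)
  have gpi: "g w = of_real pi" if "w \<in> - \<int>" for w
  proof -
    have w: "w \<notin> \<int>" using that by simp
    have "g w = (Gamma w * Gamma (1 - w)) * sin (of_real pi * w)" unfolding g_def by simp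
    also have "\<dots> = of_real pi" using sin_pi_nonzero[OF w] by (simp add: Gamma_reflection_complex)
    finally show ?thesis .
  qed
  have d2: "(g has_field_derivative 0) (at z)"
  proof (rule has_field_derivative_transform_within_open[of "\<lambda>_. of_real pi" 0 z "- \<int>"])
    show "((\<lambda>_. complex_of_real pi) has_field_derivative 0) (at z)" by simp
    show "open (- (\<int> :: complex set))" using closed_Ints by (simp add: open_Compl)
    show "z \<in> - \<int>" using z by simp
    show "\<And>x. x \<in> - \<int> \<Longrightarrow> complex_of_real pi = g x" using gpi by simp
  qed
  have "g' = 0" using DERIV_unique[OF d1 d2] .
  moreover have G0: "Gamma z \<noteq> 0" "Gamma (1 - z) \<noteq> 0"
    using z0 z1 by (auto simp: Gamma_eq_zero_iff)
  moreover have "g' = (Gamma z * Gamma (1 - z)) * (Digamma z * sin (of_real pi * z)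
      - Digamma (1 - z) * sin (of_real pi * z) + of_real pi * cos (of_real pi * z))"
    unfolding g'_def by (simp add: algebra_simps)
  ultimately have "Digamma z * sin (of_real pi * z)
      - Digamma (1 - z) * sin (of_real pi * z) + of_real pi * cos (of_real pi * z) = 0"
    by simp
  hence "Digamma z - Digamma (1 - z) + of_real pi * cos (of_real pi * z) / sin (of_real pi * z) = 0"
    using s0 by (simp add: field_simps)
  thus ?thesis by (simp add: cot_def field_simps)
qed


lemma bern_fun_identity:
  fixes z :: complex assumes z: "z \<notin> \<int>"
  defines "c \<equiv> 2 * of_real pi * \<i>"
  shows "c * z * exp (c * z) / (exp (c * z) - 1) =
         1 + c / 2 * z + z * (Digamma (1 - z) - Digamma (1 + z))"
proof -
  have z0: "z \<noteq> 0" using z by auto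
  have s0: "sin (of_real pi * z) \<noteq> 0" using sin_pi_nonzero[OF z] .
  define u where "u = exp (\<i> * (of_real pi * z))"
  have u0: "u \<noteq> 0" unfolding u_def by simp
  have eu: "exp (c * z) = u ^ 2" unfolding u_def c_def
    by (subst exp_double[symmetric]) (simp add: mult_ac)
  have sinu: "sin (of_real pi * z) = (u - inverse u) / (2 * \<i>)"
    unfolding u_def by (simp add: sin_exp_eq exp_minus)
  have cosu: "cos (of_real pi * z) = (u + inverse u) / 2"
    unfolding u_def by (simp add: cos_exp_eq exp_minus)
  have uu: "u ^ 2 - 1 \<noteq> 0"
  proof
    assume "u ^ 2 - 1 = 0"
    hence "u - inverse u = 0" using u0 by (simp add: field_simps power2_eq_square)
    thus False using s0 sinu by simp
  qed
  have "1 + c / 2 * z + z * (Digamma (1 - z) - Digamma (1 + z))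
      = c / 2 * z + z * (Digamma (1 - z) - Digamma z)"
    using Digamma_plus1[OF z0] z0 by (simp add: add.commute field_simps)
  also have "\<dots> = c / 2 * z + z * (of_real pi * cot (of_real pi * z))"
    using cot_digamma[OF z] by simp
  also have "\<dots> = c * z * exp (c * z) / (exp (c * z) - 1)"
    unfolding cot_def sinu cosu eu using u0 uu
    by (simp add: c_def field_simps power2_eq_square)
  finally show ?thesis by simp
qed


definition scale_fps :: "complex \<Rightarrow> real fps \<Rightarrow> complex fps" where
  "scale_fps c F = Abs_fps (\<lambda>n. c ^ n * of_real (F $ n))"

lemma scale_fps_nth [simp]: "scale_fps c F $ n = c ^ n * of_real (F $ n)"
  by (simp add: scale_fps_def)

lemma scale_fps_mult: "scale_fps c (F * G) = scale_fps c F * scale_fps c G"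
proof (rule fps_ext)
  fix n
  have "scale_fps c (F * G) $ n = (\<Sum>i = 0..n. c ^ n * (of_real (F $ i) * of_real (G $ (n - i))))"
    by (simp add: fps_mult_nth sum_distrib_left)
  also have "\<dots> = (\<Sum>i = 0..n. (c ^ i * of_real (F $ i)) * (c ^ (n - i) * of_real (G $ (n - i))))"
  proof (rule sum.cong)
    fix i assume "i \<in> {0..n}"
    hence "c ^ n = c ^ i * c ^ (n - i)" by (simp add: power_add[symmetric])
    thus "c ^ n * (of_real (F $ i) * of_real (G $ (n - i))) =
          (c ^ i * of_real (F $ i)) * (c ^ (n - i) * of_real (G $ (n - i)))" by (simp add: mult_ac)
  qed simp
  also have "\<dots> = (scale_fps c F * scale_fps c G) $ n" by (simp add: fps_mult_nth)
  finally show "scale_fps c (F * G) $ n = (scale_fps c F * scale_fps c G) $ n" .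
qed

lemma scale_fps_diff: "scale_fps c (F - G) = scale_fps c F - scale_fps c G"
  by (rule fps_ext) (simp add: algebra_simps)

lemma scale_fps_one: "scale_fps c 1 = 1"
  by (rule fps_ext) (simp add: fps_one_nth)

lemma scale_fps_X: "scale_fps c fps_X = fps_const c * fps_X"
  by (rule fps_ext) (simp add: fps_X_def)

lemma scale_fps_exp: "scale_fps c (fps_exp 1) = fps_exp c"
  by (rule fps_ext) (simp add: fps_exp_def)

definition Fr :: "real fps" where
  "Fr = fps_X * fps_exp 1 / (fps_exp 1 - 1)"

lemma bernpoly_Fr: "bernpoly n 1 = fact n * Fr $ n"
  by (simp add: bernpoly_def Fr_def)

lemma subdegree_exp_minus1:
  assumes "(c :: 'a :: field_char_0) \<noteq> 0"
  shows "subdegree (fps_exp c - 1) = 1"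
  by (rule subdegreeI) (use assms in \<open>auto simp: fps_exp_def fps_one_nth\<close>)

lemma subdegree_X_exp:
  assumes "(c :: 'a :: field_char_0) \<noteq> 0"
  shows "subdegree (fps_const c * fps_X * fps_exp c) = 1"
  by (rule subdegreeI) (use assms in \<open>auto simp: fps_exp_def\<close>)

lemma exp_minus1_nz: "(c :: 'a :: field_char_0) \<noteq> 0 \<Longrightarrow> fps_exp c - 1 \<noteq> 0"
  using fps_exp_eq_1_iff[of c] by simp

lemma Fr_mult: "Fr * (fps_exp 1 - 1) = fps_X * fps_exp 1"
proof -
  have a: "subdegree (fps_X * fps_exp (1::real)) = 1"
    using subdegree_X_exp[of "1::real"] by simp
  have b: "subdegree (fps_exp (1::real) - 1) = 1"
    using subdegree_exp_minus1[of "1::real"] by simp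
  have "subdegree (fps_exp (1::real) - 1) \<le> subdegree (fps_X * fps_exp (1::real))"
    unfolding a b ..
  thus ?thesis unfolding Fr_def
    by (intro fps_times_divide_eq exp_minus1_nz) simp_all
qed

lemma scale_Fr:
  assumes c: "c \<noteq> 0"
  shows "scale_fps c Fr = fps_const c * fps_X * fps_exp c / (fps_exp c - 1)"
proof -
  have "scale_fps c (Fr * (fps_exp 1 - 1)) = scale_fps c (fps_X * fps_exp 1)"
    by (simp add: Fr_mult)
  hence "scale_fps c Fr * (fps_exp c - 1) = fps_const c * fps_X * fps_exp c"
    by (simp add: scale_fps_mult scale_fps_diff scale_fps_one scale_fps_X scale_fps_exp)
  hence "fps_const c * fps_X * fps_exp c / (fps_exp c - 1) = scale_fps c Fr * (fps_exp c - 1) / (fps_exp c - 1)"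
    by simp
  also have "\<dots> = scale_fps c Fr"
    using exp_minus1_nz[OF c] by (rule nonzero_mult_div_cancel_right)
  finally show ?thesis by simp
qed

lemma has_fps_expansion_bern:
  fixes c :: complex
  assumes c: "c \<noteq> 0"
  shows "(\<lambda>z. if z = 0 then 1 else c * z * exp (c * z) / (exp (c * z) - 1))
           has_fps_expansion (fps_const c * fps_X * fps_exp c / (fps_exp c - 1))"
proof (rule has_fps_expansion_divide)
  show "(\<lambda>z. c * z * exp (c * z)) has_fps_expansion fps_const c * fps_X * fps_exp c"
    by (intro has_fps_expansion_mult has_fps_expansion_cmult_left has_fps_expansion_fps_X
        has_fps_expansion_exp)
  show "(\<lambda>z. exp (c * z) - 1) has_fps_expansion fps_exp c - 1"
    by (intro has_fps_expansion_diff has_fps_expansion_exp has_fps_expansion_1)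
  show "subdegree (fps_exp c - 1) \<le> subdegree (fps_const c * fps_X * fps_exp c)"
    unfolding subdegree_exp_minus1[OF c] subdegree_X_exp[OF c] ..
  show "fps_exp c - 1 \<noteq> 0" using exp_minus1_nz[OF c] .
  show "1 = (fps_const c * fps_X * fps_exp c) $ subdegree (fps_exp c - 1) /
        (fps_exp c - 1) $ subdegree (fps_exp c - 1)"
    unfolding subdegree_exp_minus1[OF c] using c by (simp add: fps_exp_def)
qed


lemma Re_nonpos_Ints: "(w::complex) \<in> \<int>\<^sub>\<le>\<^sub>0 \<Longrightarrow> Re w \<le> 0"
  by (elim nonpos_Ints_cases) auto

lemma ball_plus_not_nonpos: "(z::complex) \<in> ball 0 1 \<Longrightarrow> 1 + z \<notin> \<int>\<^sub>\<le>\<^sub>0"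
proof
  assume z: "z \<in> ball 0 1" and w: "1 + z \<in> \<int>\<^sub>\<le>\<^sub>0"
  have "\<bar>Re z\<bar> \<le> cmod z" by (rule abs_Re_le_cmod)
  moreover have "cmod z < 1" using z by simp
  moreover have "Re (1 + z) \<le> 0" using Re_nonpos_Ints[OF w] .
  ultimately show False by simp
qed

lemma ball_minus_not_nonpos: "(z::complex) \<in> ball 0 1 \<Longrightarrow> 1 - z \<notin> \<int>\<^sub>\<le>\<^sub>0"
proof
  assume z: "z \<in> ball 0 1" and w: "1 - z \<in> \<int>\<^sub>\<le>\<^sub>0"
  have "\<bar>Re z\<bar> \<le> cmod z" by (rule abs_Re_le_cmod)
  moreover have "cmod z < 1" using z by simp
  moreover have "Re (1 - z) \<le> 0" using Re_nonpos_Ints[OF w] .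
  ultimately show False by simp
qed

lemma hd_plus:
  "(z::complex) \<in> ball 0 1 \<Longrightarrow> (deriv ^^ m) (\<lambda>w. Polygamma k (1 + w)) z = Polygamma (k + m) (1 + z)"
proof (induction m arbitrary: z)
  case 0
  then show ?case by simp
next
  case (Suc m)
  have ev: "eventually (\<lambda>w. (deriv ^^ m) (\<lambda>w. Polygamma k (1 + w)) w = Polygamma (k + m) (1 + w)) (nhds z)"
    using eventually_nhds_in_open[OF open_ball Suc.prems] by (rule eventually_mono) (use Suc.IH in auto)
  have "(deriv ^^ Suc m) (\<lambda>w. Polygamma k (1 + w)) z = deriv ((deriv ^^ m) (\<lambda>w. Polygamma k (1 + w))) z"
    by simp
  also have "\<dots> = deriv (\<lambda>w. Polygamma (k + m) (1 + w)) z" by (rule deriv_cong_ev[OF ev refl])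
  also have "\<dots> = Polygamma (k + Suc m) (1 + z)"
  proof (rule DERIV_imp_deriv)
    have nz: "1 + z \<notin> \<int>\<^sub>\<le>\<^sub>0" using ball_plus_not_nonpos[OF Suc.prems] .
    show "((\<lambda>w. Polygamma (k + m) (1 + w)) has_field_derivative Polygamma (k + Suc m) (1 + z)) (at z)"
      by (rule derivative_eq_intros refl nz | simp)+
  qed
  finally show ?case .
qed

lemma hd_minus:
  "(z::complex) \<in> ball 0 1 \<Longrightarrow> (deriv ^^ m) (\<lambda>w. Polygamma k (1 - w)) z = (-1) ^ m * Polygamma (k + m) (1 - z)"
proof (induction m arbitrary: z)
  case 0
  then show ?case by simp
next
  case (Suc m)
  have ev: "eventually (\<lambda>w. (deriv ^^ m) (\<lambda>w. Polygamma k (1 - w)) w = (-1) ^ m * Polygamma (k + m) (1 - w)) (nhds z)"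
    using eventually_nhds_in_open[OF open_ball Suc.prems] by (rule eventually_mono) (use Suc.IH in auto)
  have "(deriv ^^ Suc m) (\<lambda>w. Polygamma k (1 - w)) z = deriv ((deriv ^^ m) (\<lambda>w. Polygamma k (1 - w))) z"
    by simp
  also have "\<dots> = deriv (\<lambda>w. (-1) ^ m * Polygamma (k + m) (1 - w)) z" by (rule deriv_cong_ev[OF ev refl])
  also have "\<dots> = (-1) ^ Suc m * Polygamma (k + Suc m) (1 - z)"
  proof (rule DERIV_imp_deriv)
    have nz: "1 - z \<notin> \<int>\<^sub>\<le>\<^sub>0" using ball_minus_not_nonpos[OF Suc.prems] .
    show "((\<lambda>w. (-1) ^ m * Polygamma (k + m) (1 - w)) has_field_derivative (-1) ^ Suc m * Polygamma (k + Suc m) (1 - z)) (at z)"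
      by (rule derivative_eq_intros refl nz | simp)+
  qed
  finally show ?case .
qed

lemma D_holo: "(\<lambda>z::complex. Polygamma k (1 - z)) holomorphic_on ball 0 1"
              "(\<lambda>z::complex. Polygamma k (1 + z)) holomorphic_on ball 0 1"
proof -
  show "(\<lambda>z::complex. Polygamma k (1 - z)) holomorphic_on ball 0 1"
    by (rule analytic_imp_holomorphic, rule analytic_on_Polygamma')
       (auto intro!: analytic_intros dest: ball_minus_not_nonpos)
  show "(\<lambda>z::complex. Polygamma k (1 + z)) holomorphic_on ball 0 1"
    by (rule analytic_imp_holomorphic, rule analytic_on_Polygamma')
       (auto intro!: analytic_intros dest: ball_plus_not_nonpos)
qed

lemma D_hd:
  "(deriv ^^ m) (\<lambda>z::complex. Digamma (1 - z) - Digamma (1 + z)) 0 =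
     (-1) ^ m * Polygamma m 1 - Polygamma m 1"
proof -
  have "(deriv ^^ m) (\<lambda>z::complex. Digamma (1 - z) - Digamma (1 + z)) 0 =
        (deriv ^^ m) (\<lambda>z::complex. Digamma (1 - z)) 0 - (deriv ^^ m) (\<lambda>z::complex. Digamma (1 + z)) 0"
    by (rule higher_deriv_diff[OF D_holo(1) D_holo(2)]) auto
  also have "\<dots> = (-1) ^ m * Polygamma m 1 - Polygamma m 1"
    using hd_plus[of 0 m 0] hd_minus[of 0 m 0] by simp
  finally show ?thesis .
qed

lemma has_fps_expansion_cong_ball:
  assumes "g has_fps_expansion F" "r > 0" "\<forall>z\<in>ball 0 r. f z = g z"
  shows "f has_fps_expansion F"
proof -
  have "eventually (\<lambda>z. z \<in> ball 0 r) (nhds 0)"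
    using assms(2) by (intro eventually_nhds_in_open) auto
  moreover have "eventually (\<lambda>z. eval_fps F z = g z) (nhds 0)"
    using assms(1) by (simp add: has_fps_expansion_def)
  ultimately have "eventually (\<lambda>z. eval_fps F z = f z) (nhds 0)"
    by eventually_elim (use assms(3) in auto)
  thus ?thesis using assms(1) by (simp add: has_fps_expansion_def)
qed

lemma ball_not_Ints: "(z::complex) \<in> ball 0 1 \<Longrightarrow> z \<noteq> 0 \<Longrightarrow> z \<notin> \<int>"
proof
  assume z: "z \<in> ball 0 1" "z \<noteq> 0" "z \<in> \<int>"
  then obtain n :: int where n: "z = of_int n" by (elim Ints_cases)
  have "cmod z = \<bar>real_of_int n\<bar>" using n by (simp only: norm_of_int)
  hence "\<bar>real_of_int n\<bar> < 1" using z by simp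
  hence "n = 0" by linarith
  thus False using n z by simp
qed

lemma Fr_coeff:
  assumes n: "n \<ge> 2"
  shows "(2 * of_real pi * \<i>) ^ n * of_real (Fr $ n) =
         ((-1) ^ (n - 1) * Polygamma (n - 1) 1 - Polygamma (n - 1) (1::complex)) / fact (n - 1)"
proof -
  define c where "c = 2 * of_real pi * \<i>"
  have c0: "c \<noteq> 0" unfolding c_def by simp
  define D where "D = (\<lambda>z::complex. Digamma (1 - z) - Digamma (1 + z))"
  have holo: "D holomorphic_on ball 0 1"
    unfolding D_def using D_holo by (intro holomorphic_on_diff) auto
  have eD: "D has_fps_expansion fps_expansion D 0"
    by (rule has_fps_expansion_fps_expansion[OF open_ball _ holo]) simp
  define g where "g z = 1 + c / 2 * z + z * D z" for z
  have eg0: "(\<lambda>z. c / 2 * z) has_fps_expansion fps_const (c / 2) * fps_X"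
    by (rule has_fps_expansion_cmult_left[OF has_fps_expansion_fps_X])
  have eg1: "(\<lambda>z. z * D z) has_fps_expansion fps_X * fps_expansion D 0"
    by (rule has_fps_expansion_mult[OF has_fps_expansion_fps_X eD])
  have eg: "g has_fps_expansion (1 + fps_const (c / 2) * fps_X + fps_X * fps_expansion D 0)"
    unfolding g_def[abs_def]
    by (rule has_fps_expansion_add[OF has_fps_expansion_add[OF has_fps_expansion_1 eg0] eg1])
  define f where "f z = (if z = 0 then 1 else c * z * exp (c * z) / (exp (c * z) - 1))" for z
  have ef: "f has_fps_expansion (fps_const c * fps_X * fps_exp c / (fps_exp c - 1))"
    unfolding f_def[abs_def] using has_fps_expansion_bern[OF c0] .
  have fg: "\<forall>z\<in>ball 0 1. f z = g z"
  proof
    fix z :: complex assume z: "z \<in> ball 0 1"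
    show "f z = g z"
    proof (cases "z = 0")
      case True
      then show ?thesis by (simp add: f_def g_def)
    next
      case False
      then have zI: "z \<notin> \<int>" using ball_not_Ints[OF z] by simp
      have "f z = c * z * exp (c * z) / (exp (c * z) - 1)" using False by (simp add: f_def)
      also have "\<dots> = g z" unfolding g_def D_def c_def by (rule bern_fun_identity[OF zI])
      finally show ?thesis .
    qed
  qed
  have ef': "f has_fps_expansion (1 + fps_const (c / 2) * fps_X + fps_X * fps_expansion D 0)"
    by (rule has_fps_expansion_cong_ball[OF eg _ fg]) simp
  have eq: "fps_const c * fps_X * fps_exp c / (fps_exp c - 1) =
            1 + fps_const (c / 2) * fps_X + fps_X * fps_expansion D 0"
    by (rule fps_expansion_unique_complex[OF ef ef'])
  have "c ^ n * of_real (Fr $ n) = scale_fps c Fr $ n" by simp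
  also have "\<dots> = (1 + fps_const (c / 2) * fps_X + fps_X * fps_expansion D 0) $ n"
    using scale_Fr[OF c0] eq by simp
  also have "\<dots> = fps_expansion D 0 $ (n - 1)"
    using n by (simp add: fps_X_mult_nth fps_one_nth)
  also have "\<dots> = (deriv ^^ (n - 1)) D 0 / fact (n - 1)"
    by (simp add: fps_expansion_def)
  also have "(deriv ^^ (n - 1)) D 0 = (-1) ^ (n - 1) * Polygamma (n - 1) 1 - Polygamma (n - 1) 1"
    unfolding D_def by (rule D_hd)
  finally show ?thesis unfolding c_def .
qed


definition Zs :: "nat \<Rightarrow> real" where
  "Zs n = (\<Sum>k. inverse ((1 + real k) ^ n))"

lemma Polygamma_one_real:
  assumes "m \<ge> 1"
  shows "Polygamma m (1::real) = (-1) ^ Suc m * fact m * Zs (Suc m)"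
  using assms by (simp add: Polygamma_def Zs_def)

lemma Polygamma_one_complex: "Polygamma m (1::complex) = of_real (Polygamma m (1::real))"
  using Polygamma_of_real[of "1::real" m] by simp

lemma bernpoly_formula:
  assumes n: "n \<ge> 2"
  shows "bernpoly n 1 = (if even n then - 2 * (-1) ^ (n div 2) * fact n * Zs n / (2 * pi) ^ n else 0)"
proof -
  obtain m where m: "n = Suc m" "m \<ge> 1" using n by (cases n) auto
  have P: "Polygamma m (1::complex) = of_real ((-1) ^ n * fact m * Zs n)"
    using Polygamma_one_complex[of m] Polygamma_one_real[OF m(2)] m(1) by simp
  have key: "(2 * of_real pi * \<i>) ^ n * of_real (Fr $ n) =
         ((-1) ^ m * Polygamma m 1 - Polygamma m (1::complex)) / fact m"
    using Fr_coeff[OF n] m(1) by simp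
  have c_pow: "(2 * of_real pi * \<i>) ^ n = of_real ((2 * pi) ^ n) * \<i> ^ n"
    by (simp add: power_mult_distrib)
  show ?thesis
  proof (cases "even n")
    case True
    then obtain q where q: "n = 2 * q" by (elim evenE)
    have mo: "odd m" using True m(1) by simp
    have iq: "\<i> ^ n = of_real ((-1) ^ q)" using q by (simp add: power_mult)
    have "of_real ((2 * pi) ^ n * (-1) ^ q * Fr $ n) = (complex_of_real (-2 * Zs n))"
    proof -
      have "of_real ((2 * pi) ^ n * (-1) ^ q * Fr $ n) = (2 * of_real pi * \<i>) ^ n * of_real (Fr $ n)"
        by (simp add: c_pow iq)
      also have "\<dots> = ((-1) ^ m * Polygamma m 1 - Polygamma m (1::complex)) / fact m" by (rule key)
      also have "\<dots> = of_real (-2 * Zs n)"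
        using mo True by (simp add: P)
      finally show ?thesis .
    qed
    hence e: "(2 * pi) ^ n * (-1) ^ q * Fr $ n = -2 * Zs n" by (simp only: of_real_eq_iff)
    have "Fr $ n = -2 * (-1) ^ q * Zs n / (2 * pi) ^ n"
    proof -
      have sq: "(-1::real) ^ q * (-1) ^ q = 1" by (simp add: power_mult_distrib[symmetric])
      have "(2 * pi) ^ n \<noteq> 0" by simp
      from e have "(-1) ^ q * ((2 * pi) ^ n * (-1) ^ q * Fr $ n) = (-1) ^ q * (-2 * Zs n)" by simp
      hence "(2 * pi) ^ n * Fr $ n = -2 * (-1) ^ q * Zs n" using sq by (simp add: mult_ac)
      thus ?thesis by (simp add: field_simps)
    qed
    moreover have "n div 2 = q" using q by simp
    ultimately show ?thesis using True by (simp add: bernpoly_Fr)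
  next
    case False
    have me: "even m" using False m(1) by simp
    have "(2 * of_real pi * \<i>) ^ n * of_real (Fr $ n) = 0"
      using key me by simp
    hence "Fr $ n = 0" by simp
    thus ?thesis using False by (simp add: bernpoly_Fr)
  qed
qed




lemma gamma_moment:
  fixes N :: nat and l :: real
  assumes l: "l > 0"
  shows "((\<lambda>t. (t / l) ^ N / exp t) has_integral (fact N / l ^ N)) {0..}"
proof -
  have g: "((\<lambda>t. t powr (real N + 1 - 1) / exp t) has_integral Gamma (real N + 1)) {0..}"
    by (rule Gamma_integral_real) simp
  have gf: "Gamma (real N + 1) = fact N" using Gamma_fact[of N] by (simp add: add.commute)
  have ee: "real N + 1 - 1 = real N" by simp
  have g': "((\<lambda>t::real. t powr (real N) / exp t) has_integral fact N) {0..}"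
    using g unfolding gf ee .
  have g'': "((\<lambda>t::real. t ^ N / exp t) has_integral fact N) {0..}"
  proof -
    have "((\<lambda>t::real. t ^ N / exp t) has_integral fact N) {0..} \<longleftrightarrow>
          ((\<lambda>t. t powr (real N) / exp t) has_integral fact N) {0..}"
      by (rule has_integral_spike_finite_eq[of "{0}"]) (auto simp: powr_realpow)
    thus ?thesis using g' by simp
  qed
  have "((\<lambda>t. t ^ N / exp t * (1 / l ^ N)) has_integral (fact N * (1 / l ^ N))) {0..}"
    by (rule has_integral_mult_left[OF g''])
  moreover have "(\<lambda>t. t ^ N / exp t * (1 / l ^ N)) = (\<lambda>t. (t / l) ^ N / exp t)"
    by (rule ext) (simp add: power_divide)
  ultimately show ?thesis by simp
qed

lemma integral_pos:
  fixes f :: "real \<Rightarrow> real"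
  assumes I: "(f has_integral I) {0..}" and nn: "\<And>t. t \<ge> 0 \<Longrightarrow> f t \<ge> 0"
    and cont: "isCont f x0" and x0: "x0 > 0" and fx0: "f x0 > 0"
  shows "I > 0"
proof -
  have "(f \<longlongrightarrow> f x0) (at x0)" using cont by (simp add: isCont_def)
  moreover have "f x0 / 2 < f x0" using fx0 by simp
  ultimately have "eventually (\<lambda>t. f x0 / 2 < f t) (at x0)"
    by (rule order_tendstoD)
  then obtain d where d: "d > 0" "\<And>t. t \<noteq> x0 \<Longrightarrow> dist t x0 < d \<Longrightarrow> f x0 / 2 < f t"
    unfolding eventually_at by auto
  define e where "e = min d x0 / 2"
  have e: "e > 0" "e < d" using d x0 by (auto simp: e_def)
  have lower: "f x0 / 2 \<le> f t" if "t \<in> {x0..x0 + e}" for t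
  proof (cases "t = x0")
    case True then show ?thesis using fx0 by simp
  next
    case False
    have "dist t x0 < d" using that e by (auto simp: dist_real_def)
    then show ?thesis using d(2)[OF False] by simp
  qed
  define g where "g t = (if t \<in> {x0..x0 + e} then f x0 / 2 else 0)" for t
  have gi: "(g has_integral (f x0 / 2 * e)) {0..}"
  proof -
    have "((\<lambda>t. f x0 / 2) has_integral (content {x0..x0 + e} *\<^sub>R (f x0 / 2))) {x0..x0 + e}"
      by (rule has_integral_const_real)
    moreover have "content {x0..x0 + e} = e" using e by simp
    ultimately have "((\<lambda>t. f x0 / 2) has_integral (f x0 / 2 * e)) {x0..x0 + e}" by (simp add: mult_ac)
    moreover have "{x0..x0 + e} \<subseteq> {0..}" using x0 by auto
    moreover have sub: "{x0..x0 + e} \<subseteq> {0..}" using x0 by auto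
    ultimately show ?thesis unfolding g_def by (subst has_integral_restrict[OF sub])
  qed
  have "f x0 / 2 * e \<le> I"
  proof (rule has_integral_le[OF gi I])
    fix t :: real assume t: "t \<in> {0..}"
    show "g t \<le> f t"
    proof (cases "t \<in> {x0..x0 + e}")
      case True
      then show ?thesis using lower[OF True] by (simp add: g_def)
    next
      case False
      then have "g t = 0" unfolding g_def by (rule if_not_P)
      then show ?thesis using nn[of t] t by simp
    qed
  qed
  moreover have "f x0 / 2 * e > 0" using fx0 e by simp
  ultimately show ?thesis by simp
qed





theorem proposition3p1:
  fixes r :: nat and p :: "nat \<Rightarrow> nat"
  assumes "r \<ge> 1"
    and "\<And>j. 1 \<le> j \<Longrightarrow> j \<le> r \<Longrightarrow> prime (p j)"
    and "\<And>j. 1 \<le> j \<Longrightarrow> j < r \<Longrightarrow> p j < p (j + 1)"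
    and "p 1 > 2"
    and "\<And>j. 1 \<le> j \<Longrightarrow> j \<le> r - 1 \<Longrightarrow> p (j + 1) - p j > r"
  shows "det (mat r r (\<lambda>(i, l).
            let j = i + 1; k = l + 1; \<alpha> = p j - j; n = \<alpha> + k - 1
            in bernpoly n 1 / real n)) \<noteq> 0"
proof
  define M where "M = mat r r (\<lambda>(i, l).
            let j = i + 1; k = l + 1; \<alpha> = p j - j; n = \<alpha> + k - 1
            in bernpoly n 1 / real n)"
  assume "det (mat r r (\<lambda>(i, l).
            let j = i + 1; k = l + 1; \<alpha> = p j - j; n = \<alpha> + k - 1
            in bernpoly n 1 / real n)) = 0"
  hence det0: "det M = 0" unfolding M_def .
  define A where "A i = p (i + 1) - (i + 1)" for i
  have Mij: "M $$ (i, l) = bernpoly (A i + l) 1 / real (A i + l)" if "i < r" "l < r" for i l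
    using that by (simp add: M_def A_def Let_def)
  have pbound: "p (i + 1) \<ge> 2 * i + 3" if "i < r" for i
    using that
  proof (induction i)
    case 0
    then show ?case using assms(4) by simp
  next
    case (Suc i)
    have "p (i + 2) - p (i + 1) > r" using assms(5)[of "i + 1"] Suc.prems by simp
    hence "p (i + 2) \<ge> p (i + 1) + 2" using assms(1) by linarith
    thus ?case using Suc by simp
  qed
  have podd: "odd (p (i + 1))" if "i < r" for i
  proof (rule prime_odd_nat)
    show "prime (p (i + 1))" using assms(2)[of "i + 1"] that by simp
    show "2 < p (i + 1)" using pbound[OF that] by simp
  qed
  have A2: "A i \<ge> i + 2" if "i < r" for i
    using pbound[OF that] unfolding A_def by simp
  have gap: "A i + 1 \<le> A (i + 1)" if "i + 1 < r" for i
  proof -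
    have "p (i + 2) - p (i + 1) > r" using assms(5)[of "i + 1"] that by simp
    moreover have "p (i + 1) \<ge> 2 * i + 3" using pbound that by simp
    ultimately show ?thesis unfolding A_def using assms(1) by simp
  qed
  have Amono: "A i < A l" if "i < l" "l < r" for i l
    using that
  proof (induction l)
    case 0
    then show ?case by simp
  next
    case (Suc l)
    have g: "A l + 1 \<le> A (l + 1)" using gap[of l] Suc.prems by simp
    show ?case
    proof (cases "i = l")
      case True
      then show ?thesis using g by simp
    next
      case False
      then have "A i < A l" using Suc by simp
      then show ?thesis using g by simp
    qed
  qed
  have Apar: "even (A i + i)" if "i < r" for i
  proof -
    have "A i + i + 1 = p (i + 1)" using pbound[OF that] unfolding A_def by simp
    thus ?thesis using podd[OF that] by presburger
  qed
  have Mzero: "M $$ (i, l) = 0" if "i < r" "l < r" "odd (A i + l)" for i l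
  proof -
    have "A i + l \<ge> 2" using A2[OF that(1)] by simp
    hence "bernpoly (A i + l) 1 = 0" using bernpoly_formula[of "A i + l"] that(3) by simp
    thus ?thesis using Mij[OF that(1,2)] by simp
  qed
  have Meven: "M $$ (i, l) = - 2 * (-1) ^ ((A i + l) div 2) * (fact (A i + l - 1) * Zs (A i + l)) / (2 * pi) ^ (A i + l)"
    if "i < r" "l < r" "even (A i + l)" for i l
  proof -
    define n where "n = A i + l"
    have n2: "n \<ge> 2" using A2[OF that(1)] unfolding n_def by simp
    have "bernpoly n 1 = - 2 * (-1) ^ (n div 2) * fact n * Zs n / (2 * pi) ^ n"
      using bernpoly_formula[OF n2] that(3) unfolding n_def by simp
    moreover have "fact n = real n * fact (n - 1)" using n2 fact_reduce[of n] by simp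
    ultimately have "bernpoly n 1 / real n = - 2 * (-1) ^ (n div 2) * (fact (n - 1) * Zs n) / (2 * pi) ^ n"
      using n2 by (simp add: field_simps)
    thus ?thesis using Mij[OF that(1,2)] unfolding n_def by simp
  qed
  have Mcar: "M \<in> carrier_mat r r" unfolding M_def by simp
  obtain v where v: "v \<in> carrier_vec r" "v \<noteq> 0\<^sub>v r" "M *\<^sub>v v = 0\<^sub>v r"
    using det0 det_0_iff_vec_prod_zero_field[OF Mcar] by blast
  have "\<exists>l<r. v $ l \<noteq> 0"
  proof (rule ccontr)
    assume "\<not> ?thesis"
    hence "v = 0\<^sub>v r" using v(1) by (intro eq_vecI) auto
    thus False using v(2) by simp
  qed
  then obtain l0 where l0: "l0 < r" "v $ l0 \<noteq> 0" by blast
  define \<pi> where "\<pi> = l0 mod 2"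
  define I where "I = {l. l < r \<and> l mod 2 = \<pi>}"
  have finI: "finite I" unfolding I_def by simp
  have l0I: "l0 \<in> I" unfolding I_def \<pi>_def using l0 by simp
  have Ir: "i < r" if "i \<in> I" for i using that unfolding I_def by simp
  have Ipar: "i mod 2 = \<pi>" if "i \<in> I" for i using that unfolding I_def by simp
  have evenI: "even (A i + l)" if "i \<in> I" "l \<in> I" for i l
    using Apar[OF Ir[OF that(1)]] Ipar[OF that(1)] Ipar[OF that(2)] by presburger
  have oddI: "odd (A i + l)" if "i \<in> I" "l < r" "l \<notin> I" for i l
  proof -
    have "l mod 2 \<noteq> \<pi>" using that(2,3) unfolding I_def by simp
    thus ?thesis using Apar[OF Ir[OF that(1)]] Ipar[OF that(1)] by presburger
  qed
  define q where "q = 1 / (2 * pi)"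
  define \<epsilon> where "\<epsilon> l = (-1::real) ^ ((l - \<pi>) div 2)" for l
  define \<eta> where "\<eta> i = (-1::real) ^ ((A i + \<pi>) div 2)" for i
  have split: "(A i + l) div 2 = (A i + \<pi>) div 2 + (l - \<pi>) div 2" if "i \<in> I" "l \<in> I" for i l
  proof -
    have "A i mod 2 = \<pi>" using Apar[OF Ir[OF that(1)]] Ipar[OF that(1)] by presburger
    moreover have "l mod 2 = \<pi>" using Ipar[OF that(2)] .
    moreover have "\<pi> = 0 \<or> \<pi> = 1" unfolding \<pi>_def by auto
    ultimately have a: "A i = 2 * (A i div 2) + \<pi>" and b: "l = 2 * (l div 2) + \<pi>"
      by (metis div_mult_mod_eq mult.commute)+
    define x where "x = A i div 2"
    define y where "y = l div 2"
    have a': "A i = 2 * x + \<pi>" and b': "l = 2 * y + \<pi>" using a b unfolding x_def y_def by simp_all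
    show ?thesis using \<open>\<pi> = 0 \<or> \<pi> = 1\<close>
    proof
      assume "\<pi> = 0"
      thus ?thesis unfolding a' b' by simp
    next
      assume "\<pi> = 1"
      thus ?thesis unfolding a' b' by simp
    qed
  qed
  have entry: "M $$ (i, l) = -2 * \<eta> i * q ^ (A i) * (\<epsilon> l * q ^ l * (fact (A i + l - 1) * Zs (A i + l)))"
    if "i \<in> I" "l \<in> I" for i l
  proof -
    define C where "C = fact (A i + l - 1) * Zs (A i + l)"
    have e1: "M $$ (i, l) = (- 2 * (-1) ^ ((A i + l) div 2) * C) * (1 / (2 * pi) ^ (A i + l))"
      using Meven[OF Ir[OF that(1)] Ir[OF that(2)] evenI[OF that]] unfolding C_def by simp
    have s1: "(-1::real) ^ ((A i + l) div 2) = \<eta> i * \<epsilon> l"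
      unfolding split[OF that] \<eta>_def \<epsilon>_def by (simp add: power_add)
    have s2: "1 / (2 * pi) ^ (A i + l) = q ^ (A i) * q ^ l"
      unfolding q_def by (simp add: power_add power_one_over)
    have "M $$ (i, l) = (- 2 * (\<eta> i * \<epsilon> l) * C) * (q ^ (A i) * q ^ l)"
      unfolding e1 s1 s2 ..
    thus ?thesis unfolding C_def by (simp add: ac_simps)
  qed
  define u where "u l = \<epsilon> l * q ^ l * v $ l" for l
  have kernel: "(\<Sum>l\<in>I. u l * (fact (A i + l - 1) * Zs (A i + l))) = 0" if iI: "i \<in> I" for i
  proof -
    have i: "i < r" using Ir[OF iI] .
    have "0 = (M *\<^sub>v v) $ i" using v(3) i by simp
    also have "\<dots> = (\<Sum>l\<in>{0..<r}. M $$ (i, l) * v $ l)"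
      using i v(1) Mcar by (simp add: scalar_prod_def)
    also have "\<dots> = (\<Sum>l\<in>I. M $$ (i, l) * v $ l)"
    proof (rule sum.mono_neutral_right)
      show "finite {0..<r}" by simp
      show "I \<subseteq> {0..<r}" using Ir by auto
      show "\<forall>l\<in>{0..<r} - I. M $$ (i, l) * v $ l = 0"
        using Mzero[OF i] oddI[OF iI] by auto
    qed
    also have "\<dots> = (-2 * \<eta> i * q ^ (A i)) * (\<Sum>l\<in>I. u l * (fact (A i + l - 1) * Zs (A i + l)))"
      unfolding sum_distrib_left
      by (rule sum.cong[OF refl]) (simp add: entry[OF iI] u_def mult_ac)
    finally have "(-2 * \<eta> i * q ^ (A i)) * (\<Sum>l\<in>I. u l * (fact (A i + l - 1) * Zs (A i + l))) = 0"
      by simp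
    moreover have "-2 * \<eta> i * q ^ (A i) \<noteq> 0" unfolding \<eta>_def q_def by simp
    ultimately show ?thesis by (metis mult_eq_0_iff)
  qed

  define a where "a i = A i - 1" for i
  have aA1: "A i + l - 1 = a i + l" "A i + l = a i + l + 1" if "i \<in> I" for i l
    using A2[OF Ir[OF that]] unfolding a_def by auto
  have a1: "a i \<ge> 1" if "i \<in> I" for i using A2[OF Ir[OF that]] unfolding a_def by simp
  define G where "G = (\<Sum>l\<in>I. monom (u l) l)"
  have polyG: "poly G x = (\<Sum>l\<in>I. u l * x ^ l)" for x
    unfolding G_def by (simp add: poly_sum poly_monom)
  have coeffG: "coeff G j = (if j \<in> I then u j else 0)" for j
    unfolding G_def by (simp add: coeff_sum coeff_monom finI)
  have ul0: "u l0 \<noteq> 0" unfolding u_def \<epsilon>_def q_def using l0 by simp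
  have G0: "G \<noteq> 0"
  proof
    assume "G = 0"
    hence "coeff G l0 = 0" by simp
    thus False using coeffG[of l0] l0I ul0 by simp
  qed
  have nzG: "nzc G \<le> card I"
  proof -
    have "{j. coeff G j \<noteq> 0} \<subseteq> I" using coeffG by (auto split: if_splits)
    thus ?thesis unfolding nzc_def using finI by (rule card_mono[rotated])
  qed
  have inja: "inj_on a I"
  proof (rule inj_onI)
    fix i j assume ij: "i \<in> I" "j \<in> I" "a i = a j"
    have "A i = A j" using A2[OF Ir[OF ij(1)]] A2[OF Ir[OF ij(2)]] ij(3) unfolding a_def by simp
    show "i = j"
    proof (rule ccontr)
      assume "i \<noteq> j"
      hence "i < j \<or> j < i" by linarith
      thus False
      proof
        assume "i < j"
        hence "A i < A j" using Amono Ir[OF ij(2)] by blast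
        thus False using \<open>A i = A j\<close> by simp
      next
        assume "j < i"
        hence "A j < A i" using Amono Ir[OF ij(1)] by blast
        thus False using \<open>A i = A j\<close> by simp
      qed
    qed
  qed
  define E where "E = a ` I"
  have finE: "finite E" unfolding E_def using finI by simp
  have cardE: "card E = card I" unfolding E_def using card_image[OF inja] .
  obtain w where w: "\<forall>x>0. 0 \<le> (\<Sum>e\<in>E. w e * x ^ e) * poly G x"
      "\<exists>x>0. (\<Sum>e\<in>E. w e * x ^ e) * poly G x \<noteq> 0"
  proof -
    have "nzc G \<le> card E" using nzG cardE by simp
    thus ?thesis using sign_partner[OF G0 finE] that by blast
  qed
  define W where "W i = w (a i)" for i
  have hsum: "(\<Sum>e\<in>E. w e * x ^ e) = (\<Sum>i\<in>I. W i * x ^ (a i))" for x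
    unfolding E_def W_def by (rule sum.reindex[OF inja, unfolded comp_def])
  have HG: "(\<Sum>e\<in>E. w e * x ^ e) * poly G x = (\<Sum>i\<in>I. \<Sum>l\<in>I. W i * u l * x ^ (a i + l))" for x
    unfolding hsum polyG sum_product by (simp add: power_add mult_ac)
  define S where "S = (\<Sum>i\<in>I. \<Sum>l\<in>I. W i * u l * (fact (a i + l) * Zs (a i + l + 1)))"
  have S0: "S = 0"
  proof -
    have "S = (\<Sum>i\<in>I. W i * (\<Sum>l\<in>I. u l * (fact (A i + l - 1) * Zs (A i + l))))"
      unfolding S_def sum_distrib_left
    proof (intro sum.cong refl)
      fix i l assume "i \<in> I" "l \<in> I"
      show "W i * u l * (fact (a i + l) * Zs (a i + l + 1)) =
            W i * (u l * (fact (A i + l - 1) * Zs (A i + l)))"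
        using aA1[OF \<open>i \<in> I\<close>, of l] by (simp add: mult_ac)
    qed
    also have "\<dots> = 0" using kernel by simp
    finally show ?thesis .
  qed
  define F where "F k = (\<Sum>i\<in>I. \<Sum>l\<in>I. W i * u l * (fact (a i + l) * inverse ((1 + real k) ^ (a i + l + 1))))" for k
  have Fsums: "F sums S"
    unfolding F_def[abs_def] S_def
  proof (intro sums_sum)
    fix i l assume "i \<in> I" "l \<in> I"
    have sm: "summable (\<lambda>k. inverse ((1 + real k) ^ (a i + l + 1)))"
      using Polygamma_converges'[of "1::real" "a i + l + 1"] a1[OF \<open>i \<in> I\<close>] by simp
    have "(\<lambda>k. inverse ((1 + real k) ^ (a i + l + 1))) sums Zs (a i + l + 1)"
      unfolding Zs_def using summable_sums[OF sm] .
    from sums_mult[OF this, of "W i * u l * fact (a i + l)"]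
    show "(\<lambda>k. W i * u l * (fact (a i + l) * inverse ((1 + real k) ^ (a i + l + 1)))) sums
          (W i * u l * (fact (a i + l) * Zs (a i + l + 1)))" by (simp add: mult_ac)
  qed
  define g where "g k t = (\<Sum>i\<in>I. \<Sum>l\<in>I. W i * u l * ((t / (1 + real k)) ^ (a i + l) / exp t))" for k t
  have gint: "(g k has_integral ((1 + real k) * F k)) {0..}" for k
  proof -
    have lpos: "1 + real k > 0" by simp
    have "(g k has_integral (\<Sum>i\<in>I. \<Sum>l\<in>I. W i * u l * (fact (a i + l) / (1 + real k) ^ (a i + l)))) {0..}"
      unfolding g_def[abs_def]
      by (intro has_integral_sum finI has_integral_mult_right gamma_moment lpos)
    moreover have "(\<Sum>i\<in>I. \<Sum>l\<in>I. W i * u l * (fact (a i + l) / (1 + real k) ^ (a i + l))) = (1 + real k) * F k"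
      unfolding F_def sum_distrib_left
    proof (intro sum.cong refl)
      fix i l
      define L where "L = 1 + real k"
      have L0: "L \<noteq> 0" unfolding L_def by simp
      have "L * inverse (L ^ (a i + l + 1)) = 1 / L ^ (a i + l)" using L0 by (simp add: field_simps)
      thus "W i * u l * (fact (a i + l) / (1 + real k) ^ (a i + l)) =
            (1 + real k) * (W i * u l * (fact (a i + l) * inverse ((1 + real k) ^ (a i + l + 1))))"
        unfolding L_def[symmetric] using L0 by (simp add: field_simps)
    qed
    ultimately show ?thesis by simp
  qed
  have gHG: "g k t = ((\<Sum>e\<in>E. w e * (t / (1 + real k)) ^ e) * poly G (t / (1 + real k))) / exp t" for k t
    unfolding g_def HG by (simp add: sum_divide_distrib)
  have gnn: "g k t \<ge> 0" if "t \<ge> 0" for k t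
  proof (cases "t = 0")
    case True
    have "g k 0 = 0" unfolding g_def
    proof (rule sum.neutral, rule ballI, rule sum.neutral, rule ballI)
      fix i l assume i: "i \<in> I" and "l \<in> I"
      have "a i + l \<noteq> 0" using a1[OF i] by simp
      thus "W i * u l * ((0 / (1 + real k)) ^ (a i + l) / exp 0) = 0" by simp
    qed
    hence "g k t = 0" using True by simp
    thus ?thesis by simp
  next
    case False
    hence "t / (1 + real k) > 0" using that by simp
    hence "0 \<le> (\<Sum>e\<in>E. w e * (t / (1 + real k)) ^ e) * poly G (t / (1 + real k))" using w(1) by blast
    thus ?thesis unfolding gHG by simp
  qed
  have Fnn: "F k \<ge> 0" for k
  proof -
    have "0 \<le> (1 + real k) * F k" by (rule has_integral_nonneg[OF gint]) (use gnn in auto)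
    thus ?thesis by (simp add: zero_le_mult_iff)
  qed
  have F0: "F 0 > 0"
  proof -
    obtain x0 where x0: "x0 > 0" "(\<Sum>e\<in>E. w e * x0 ^ e) * poly G x0 \<noteq> 0" using w(2) by blast
    have "0 \<le> (\<Sum>e\<in>E. w e * x0 ^ e) * poly G x0" using w(1) x0(1) by blast
    hence pos: "0 < (\<Sum>e\<in>E. w e * x0 ^ e) * poly G x0" using x0(2) by linarith
    have "g 0 x0 = ((\<Sum>e\<in>E. w e * x0 ^ e) * poly G x0) / exp x0" unfolding gHG by simp
    hence "g 0 x0 > 0" using divide_pos_pos[OF pos exp_gt_zero] by simp
    moreover have "isCont (g 0) x0" unfolding g_def by (intro continuous_intros) auto
    ultimately have "(1 + real 0) * F 0 > 0"
      by (intro integral_pos[OF gint _ _ x0(1)]) (use gnn in auto)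
    thus ?thesis by simp
  qed
  have "S > 0"
  proof -
    have "summable F" using Fsums by (rule sums_summable)
    hence "0 < suminf F" by (rule suminf_pos2[where i = 0]) (use Fnn F0 in auto)
    thus ?thesis using sums_unique[OF Fsums] by simp
  qed
  thus False using S0 by simp
qed


end
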